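(* Let $\mathcal C$ be a concept hierarchy and $r_2\in[0,1]$. Let $\mathcal A_1$ be the network defined below. Then for every $B\subseteq C_0$ presented at time 0 and every $c\in supp_{r_2}(B)$, the neuron $rep(c)$ fires at time $level(c)$ in $\mathcal A_1$ (that is, $\mathcal A_1$ guarantees $r_2$-firing for $\mathcal C$).
   Context: Concept hierarchies: fix positive integers $\ell_{max},n,k$. A universal set $D$ of concepts is partitioned into disjoint sets $D_0,\dots,D_{\ell_{max}}$ with $|D_0|=n$; $level(c)=\ell$ for $c\in D_\ell$. A concept hierarchy $\mathcal C$ consists of $C\subseteq D$, with $C_\ell=C\cap D_\ell$, and for each $c\in C_\ell$ with $1\le\ell\le\ell_{max}$ a set $children(c)\subseteq C_{\ell-1}$, such that $|C_{\ell_{max}}|=k$, $|children(c)|=k$ for all such $c$, and $children(c)\cap children(c')=\emptyset$ for distinct $c,c'\in C_\ell$. For $B\subseteq D_0$ and $r\in[0,1]$: $B(0)=B\cap C_0$; for $1\le\ell\le\ell_{max}$, $B(\ell)=\{c\in C_\ell:|children(c)\cap B(\ell-1)|\ge rk\}$; $supp_r(B)=\bigcup_{\ell}B(\ell)$. Network $\mathcal A_1$: neurons partitioned into layers $N_0,\dots,N_{\ell_{max}}$; no failures. Each $c\in D_0$ has a neuron $rep(c)\in N_0$ and each $c\in C$ with $level(c)\ge1$ a neuron $rep(c)\in N_{level(c)}$, all distinct. For $v\in N_\ell$, $\ell\ge1$, and $u\in N_{\ell-1}$, the edge weight $w(u,v)$ is $1$ if $v=rep(c)$ and $u=rep(c')$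 for some child $c'$ of $c$, and $0$ otherwise. Threshold $\tau=r_2k$. Input $B\subseteq C_0$ presented at time 0: layer-0 neurons in $\{rep(b):b\in B\}$ fire at time 0, other layer-0 neurons do not, and no layer-0 neuron fires at any other time. Every neuron $v$ in a layer $\ell\ge1$ does not fire at time 0 and fires at time $t\ge1$ iff $\sum_{u\in N_{\ell-1}}w(u,v)x_u(t-1)\ge\tau$, where $x_u(s)\in\{0,1\}$ indicates whether $u$ fires at time $s$. *)

theory Defs
  imports Complex_Main
begin

definition concept_hierarchy ::
  "nat \<Rightarrow> nat \<Rightarrow> nat \<Rightarrow> 'c set \<Rightarrow> ('c \<Rightarrow> nat) \<Rightarrow> 'c set \<Rightarrow> ('c \<Rightarrow> 'c set) \<Rightarrow> bool" where
  "concept_hierarchy lmax n k D lev C children \<longleftrightarrow>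
     lmax > 0 \<and> n > 0 \<and> k > 0 \<and>
     (\<forall>c\<in>D. lev c \<le> lmax) \<and>
     finite {c\<in>D. lev c = 0} \<and> card {c\<in>D. lev c = 0} = n \<and>
     C \<subseteq> D \<and>
     finite {c\<in>C. lev c = lmax} \<and> card {c\<in>C. lev c = lmax} = k \<and>
     (\<forall>c\<in>C. 1 \<le> lev c \<longrightarrow>
        children c \<subseteq> {c'\<in>C. lev c' = lev c - 1} \<and>
        finite (children c) \<and> card (children c) = k) \<and>
     (\<forall>c\<in>C. \<forall>c'\<in>C. 1 \<le> lev c \<longrightarrow> lev c' = lev c \<longrightarrow> c \<noteq> c' \<longrightarrow>
        children c \<inter> children c' = {})"

fun supp_level ::
  "'c set \<Rightarrow> ('c \<Rightarrow> nat) \<Rightarrow> ('c \<Rightarrow> 'c set) \<Rightarrow> nat \<Rightarrow> real \<Rightarrow> 'c set \<Rightarrow> nat \<Rightarrow> 'c set" where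
  "supp_level C lev children k r B 0 = B \<inter> {c\<in>C. lev c = 0}"
| "supp_level C lev children k r B (Suc l) =
     {c\<in>C. lev c = Suc l \<and>
        real (card (children c \<inter> supp_level C lev children k r B l)) \<ge> r * real k}"

definition supp ::
  "nat \<Rightarrow> 'c set \<Rightarrow> ('c \<Rightarrow> nat) \<Rightarrow> ('c \<Rightarrow> 'c set) \<Rightarrow> nat \<Rightarrow> real \<Rightarrow> 'c set \<Rightarrow> 'c set" where
  "supp lmax C lev children k r B = (\<Union>l\<in>{0..lmax}. supp_level C lev children k r B l)"

definition weight_A1 ::
  "'c set \<Rightarrow> ('c \<Rightarrow> nat) \<Rightarrow> ('c \<Rightarrow> 'c set) \<Rightarrow> ('c \<Rightarrow> 'n) \<Rightarrow> 'n \<Rightarrow> 'n \<Rightarrow> real" where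
  "weight_A1 C lev children rep u v =
     (if \<exists>c\<in>C. 1 \<le> lev c \<and> v = rep c \<and> (\<exists>c'\<in>children c. u = rep c') then 1 else 0)"

fun fires ::
  "'n set \<Rightarrow> ('n \<Rightarrow> nat) \<Rightarrow> ('n \<Rightarrow> 'n \<Rightarrow> real) \<Rightarrow> real \<Rightarrow> 'n set \<Rightarrow> nat \<Rightarrow> 'n \<Rightarrow> bool" where
  "fires N layer w tau X0 0 v = (layer v = 0 \<and> v \<in> X0)"
| "fires N layer w tau X0 (Suc t) v =
     (1 \<le> layer v \<and>
      (\<Sum>u\<in>{u\<in>N. layer u = layer v - 1}. w u v * (if fires N layer w tau X0 t u then 1 else 0)) \<ge> tau)"

definition network_rep ::
  "nat \<Rightarrow> 'c set \<Rightarrow> ('c \<Rightarrow> nat) \<Rightarrow> 'c set \<Rightarrow> 'n set \<Rightarrow> ('n \<Rightarrow> nat) \<Rightarrow> ('c \<Rightarrow> 'n) \<Rightarrow> bool" where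
  "network_rep lmax D lev C N layer rep \<longleftrightarrow>
     finite N \<and> (\<forall>v\<in>N. layer v \<le> lmax) \<and>
     (\<forall>c\<in>D. lev c = 0 \<longrightarrow> rep c \<in> N \<and> layer (rep c) = 0) \<and>
     (\<forall>c\<in>C. 1 \<le> lev c \<longrightarrow> rep c \<in> N \<and> layer (rep c) = lev c) \<and>
     inj_on rep ({c\<in>D. lev c = 0} \<union> C)"

end

theory Submission
  imports Defs
begin

lemma supp_level_lev:
  "c \<in> supp_level C lev children k r B l \<Longrightarrow> c \<in> C \<and> lev c = l"
  by (cases l) auto

lemma main_ind:
  assumes H: "concept_hierarchy lmax n k D lev C children"
    and R: "network_rep lmax D lev C N layer rep"
    and B: "B \<subseteq> {c\<in>C. lev c = 0}"
  shows "\<forall>c\<in>supp_level C lev children k r B l.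
           fires N layer (weight_A1 C lev children rep) (r * real k) (rep ` B) l (rep c)"
proof (induction l)
  case 0
  have "C \<subseteq> D" using H by (simp add: concept_hierarchy_def)
  show ?case
  proof
    fix c assume "c \<in> supp_level C lev children k r B 0"
    hence c: "c \<in> B" "c \<in> C" "lev c = 0" by auto
    hence "layer (rep c) = 0" using R \<open>C \<subseteq> D\<close> unfolding network_rep_def by blast
    then show "fires N layer (weight_A1 C lev children rep) (r * real k) (rep ` B) 0 (rep c)"
      using c by simp
  qed
next
  case (Suc l)
  show ?case
  proof
    fix c assume c: "c \<in> supp_level C lev children k r B (Suc l)"
    hence cC: "c \<in> C" and lc: "lev c = Suc l"
      and cardc: "real (card (children c \<inter> supp_level C lev children k r B l)) \<ge> r * real k"
      by auto
    have CD: "C \<subseteq> D" using H by (simp add: concept_hierarchy_def)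
    have "\<forall>c\<in>C. 1 \<le> lev c \<longrightarrow> children c \<subseteq> {c'\<in>C. lev c' = lev c - 1} \<and> finite (children c) \<and> card (children c) = k"
      using H unfolding concept_hierarchy_def by blast
    hence "1 \<le> lev c \<longrightarrow> children c \<subseteq> {c'\<in>C. lev c' = lev c - 1} \<and> finite (children c) \<and> card (children c) = k"
      using cC by blast
    hence "children c \<subseteq> {c'\<in>C. lev c' = Suc l - 1} \<and> finite (children c)"
      unfolding lc by simp
    hence ch: "children c \<subseteq> {c'\<in>C. lev c' = l}" and finch: "finite (children c)"
      by simp_all
    have finN: "finite N" and inj: "inj_on rep ({c\<in>D. lev c = 0} \<union> C)"
      using R by (auto simp: network_rep_def)
    have layc: "layer (rep c) = Suc l" using R cC lc by (auto simp: network_rep_def)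
    define S where "S = children c \<inter> supp_level C lev children k r B l"
    define M where "M = {u\<in>N. layer u = layer (rep c) - 1}"
    define w where "w = weight_A1 C lev children rep"
    define f where "f = (\<lambda>u. w u (rep c) * (if fires N layer w (r * real k) (rep ` B) l u then 1 else 0))"
    have sub: "rep ` S \<subseteq> M"
    proof
      fix u assume "u \<in> rep ` S"
      then obtain c' where c': "c' \<in> S" "u = rep c'" by auto
      hence "c' \<in> C" "lev c' = l" using ch S_def by auto
      have R3: "\<forall>c\<in>D. lev c = 0 \<longrightarrow> rep c \<in> N \<and> layer (rep c) = 0"
        and R4: "\<forall>c\<in>C. 1 \<le> lev c \<longrightarrow> rep c \<in> N \<and> layer (rep c) = lev c"
        using R unfolding network_rep_def by blast+
      have "rep c' \<in> N \<and> layer (rep c') = l"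
      proof (cases l)
        case 0
        have "c' \<in> D" using CD \<open>c' \<in> C\<close> by blast
        then show ?thesis using R3 0 \<open>lev c' = l\<close> by simp
      next
        case (Suc m) then show ?thesis using R4 \<open>c' \<in> C\<close> \<open>lev c' = l\<close> by simp
      qed
      then show "u \<in> M" unfolding M_def using layc c'(2) by simp
    qed
    have finM: "finite M" using finN M_def by simp
    have nonneg: "\<And>u. f u \<ge> 0" by (simp add: f_def w_def weight_A1_def)
    have one: "\<And>u. u \<in> rep ` S \<Longrightarrow> f u = 1"
    proof -
      fix u assume "u \<in> rep ` S"
      then obtain c' where c': "c' \<in> S" "u = rep c'" by auto
      have "c' \<in> children c" using c' S_def by simp
      hence "\<exists>c0\<in>C. 1 \<le> lev c0 \<and> rep c = rep c0 \<and> (\<exists>c''\<in>children c0. u = rep c'')"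
        using cC lc c'(2) by (intro bexI[of _ c]) auto
      hence "w u (rep c) = 1" unfolding w_def weight_A1_def by simp
      moreover have "fires N layer w (r * real k) (rep ` B) l u"
        using Suc.IH[rule_format, of c'] c' S_def w_def by simp
      ultimately show "f u = 1" by (simp add: f_def)
    qed
    have "S \<subseteq> {c\<in>D. lev c = 0} \<union> C" using ch S_def by blast
    hence injS: "inj_on rep S" using inj by (rule inj_on_subset[rotated])
    have finS: "finite S" using finch S_def by simp
    have "r * real k \<le> real (card S)" using cardc S_def by simp
    also have "\<dots> = real (card (rep ` S))" using injS by (simp add: card_image)
    also have "\<dots> = (\<Sum>u\<in>rep ` S. f u)" using one by simp
    also have "\<dots> \<le> (\<Sum>u\<in>M. f u)" using sub finM nonneg by (intro sum_mono2) auto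
    finally have "r * real k \<le> (\<Sum>u\<in>M. f u)" .
    then show "fires N layer (weight_A1 C lev children rep) (r * real k) (rep ` B) (Suc l) (rep c)"
      using layc by (simp add: M_def f_def w_def)
  qed
qed

theorem theorem6p1:
  fixes lmax n k :: nat and D C :: "'c set" and lev :: "'c \<Rightarrow> nat"
    and children :: "'c \<Rightarrow> 'c set" and r2 :: real
    and N :: "'n set" and layer :: "'n \<Rightarrow> nat" and rep :: "'c \<Rightarrow> 'n"
  assumes "concept_hierarchy lmax n k D lev C children"
    and "0 \<le> r2" and "r2 \<le> 1"
    and "network_rep lmax D lev C N layer rep"
  shows "\<forall>B. B \<subseteq> {c\<in>C. lev c = 0} \<longrightarrow>
           (\<forall>c\<in>supp lmax C lev children k r2 B.
              fires N layer (weight_A1 C lev children rep) (r2 * real k) (rep ` B) (lev c) (rep c))"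
proof (intro allI impI ballI)
  fix B c assume B: "B \<subseteq> {c\<in>C. lev c = 0}" and c: "c \<in> supp lmax C lev children k r2 B"
  then obtain l where l: "c \<in> supp_level C lev children k r2 B l" unfolding supp_def by blast
  hence lc: "lev c = l" by (rule supp_level_lev[THEN conjunct2])
  have "fires N layer (weight_A1 C lev children rep) (r2 * real k) (rep ` B) l (rep c)"
    using main_ind[OF assms(1) assms(4) B] l by (rule bspec)
  then show "fires N layer (weight_A1 C lev children rep) (r2 * real k) (rep ` B) (lev c) (rep c)"
    unfolding lc .
qed

end
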